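(* Let $\mathbb K$ be a field of characteristic $0$ and $N\ge2$. The image of the weight system $W^{\mathrm{St}}_{\mathfrak{sl}_N}:\mathcal A(\downarrow\downarrow)_{\mathbb K}\to\mathrm{End}(\mathbb K^N)^{\otimes2}$ associated with $(\mathfrak{sl}_N(\mathbb K),B_0,\mathrm{St})$ is a commutative subalgebra.
   Context: Jacobi diagrams on an oriented compact $1$-manifold $X$ span $\mathcal A(X)$ modulo AS, IHX, STU; $\mathcal A(X)_{\mathbb K}=\mathcal A(X)\otimes\mathbb K$; $\downarrow\downarrow$ is two downward oriented strands, and $\mathcal A(\downarrow\downarrow)$ is an algebra under stacking. For a metrized Lie algebra $(\mathfrak g,\langle\cdot,\cdot\rangle)$ over $\mathbb K$, the universal weight system $W_{\mathfrak g}:\mathcal A(\downarrow^{\otimes n})_{\mathbb K}\to U(\mathfrak g)^{\otimes n}$ is the algebra homomorphism obtained by putting on each edge the Casimir tensor $\Omega=\sum_av_a\otimes v^a$ (basis and dual basis w.r.t. the form), at each trivalent vertex $-\mathbf t$ where $\mathbf t\in\mathfrak g^{\otimes3}$ corresponds to $(x,y,z)\mapsto\langle[x,y],z\rangle$ (factors in cyclic order), contracting along edges and multiplying in $U(\mathfrak g)$ along each strand in its orientation order; for a representation $\rho:\mathfrak g\to\mathrm{End}(V)$, $W^\rho_{\mathfrak g}=U(\rho)^{\otimes n}\circ W_{\mathfrak g}$. $B_0(x,y)=\mathrm{tr}(xy)$ is the trace form and $\mathrm{St}$ the standard representation on $\mathbb K^N$. *)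

theory Defs
  imports Main "HOL-Library.FuncSet"
begin

section \<open>Matrices in End(K^N), represented as index functions (indices < N)\<close>

type_synonym 'k mat = "nat \<Rightarrow> nat \<Rightarrow> 'k"
(* element of End(K^N) \<otimes> End(K^N): T i j k l = coefficient of E_ij \<otimes> E_kl *)
type_synonym 'k tens2 = "nat \<Rightarrow> nat \<Rightarrow> nat \<Rightarrow> nat \<Rightarrow> 'k"

definition mE :: "nat \<Rightarrow> nat \<Rightarrow> 'k::field mat" where
  "mE i j = (\<lambda>a b. if a = i \<and> b = j then 1 else 0)"

definition mid :: "nat \<Rightarrow> 'k::field mat" where
  "mid N = (\<lambda>a b. if a = b \<and> a < N then 1 else 0)"

definition mmul :: "nat \<Rightarrow> 'k::field mat \<Rightarrow> 'k mat \<Rightarrow> 'k mat" where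
  "mmul N A B = (\<lambda>i j. \<Sum>m<N. A i m * B m j)"

definition mbracket :: "nat \<Rightarrow> 'k::field mat \<Rightarrow> 'k mat \<Rightarrow> 'k mat" where
  "mbracket N A B = (\<lambda>i j. mmul N A B i j - mmul N B A i j)"

definition trform :: "nat \<Rightarrow> 'k::field mat \<Rightarrow> 'k mat \<Rightarrow> 'k" where
  "trform N A B = (\<Sum>i<N. \<Sum>j<N. A i j * B j i)"

fun mprod :: "nat \<Rightarrow> 'k::field mat list \<Rightarrow> 'k mat" where
  "mprod N [] = mid N"
| "mprod N (A # As) = mmul N A (mprod N As)"

text \<open>Omega = sum_{i,j<N} E_ij \<otimes> E_ji - (1/N) I \<otimes> I, which equals
  sum_a v_a \<otimes> v^a for any basis (v_a) of sl_N with dual basis (v^a) w.r.t. tr(xy).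
  Term index: Some (i,j) for E_ij \<otimes> E_ji with coefficient 1; None for I \<otimes> I with
  coefficient -1/N.\<close>

definition omega_idx :: "nat \<Rightarrow> (nat \<times> nat) option set" where
  "omega_idx N = {None} \<union> Some ` ({..<N} \<times> {..<N})"

fun omega_fst :: "nat \<Rightarrow> (nat \<times> nat) option \<Rightarrow> 'k::field mat" where
  "omega_fst N None = mid N"
| "omega_fst N (Some (i, j)) = mE i j"

fun omega_snd :: "nat \<Rightarrow> (nat \<times> nat) option \<Rightarrow> 'k::field mat" where
  "omega_snd N None = mid N"
| "omega_snd N (Some (i, j)) = mE j i"

fun omega_coef :: "nat \<Rightarrow> (nat \<times> nat) option \<Rightarrow> 'k::field" where
  "omega_coef N None = - 1 / of_nat N"
| "omega_coef N (Some _) = 1"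

section \<open>Jacobi diagrams on two strands (uni-trivalent, vertex-oriented)\<close>

text \<open>Ends (half-edges): TV v i = i-th slot (i<3, in cyclic order) of trivalent vertex v;
  SP s p = p-th univalent vertex (in orientation order) on strand s (s<2).\<close>
datatype jend = TV nat nat | SP nat nat

record jdiag =
  nverts :: nat
  npts :: "nat \<Rightarrow> nat"
  partner :: "jend \<Rightarrow> jend"

definition ends :: "jdiag \<Rightarrow> jend set" where
  "ends D = {TV v i | v i. v < nverts D \<and> i < 3} \<union> {SP s p | s p. s < 2 \<and> p < npts D s}"

text \<open>Edges: a fixed-point-free involution on the ends.\<close>
definition wf_jdiag :: "jdiag \<Rightarrow> bool" where
  "wf_jdiag D \<longleftrightarrow> (\<forall>e\<in>ends D. partner D e \<in> ends D \<and> partner D (partner D e) = e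
                                 \<and> partner D e \<noteq> e)"

fun end_lt :: "jend \<Rightarrow> jend \<Rightarrow> bool" where
  "end_lt (TV v i) (TV w j) = (v < w \<or> (v = w \<and> i < j))"
| "end_lt (TV _ _) (SP _ _) = True"
| "end_lt (SP _ _) (TV _ _) = False"
| "end_lt (SP s p) (SP t q) = (s < t \<or> (s = t \<and> p < q))"

text \<open>States: a choice of a term of Omega for every edge (constant on edges).\<close>
definition states :: "nat \<Rightarrow> jdiag \<Rightarrow> (jend \<Rightarrow> (nat \<times> nat) option) set" where
  "states N D = {\<kappa> \<in> ends D \<rightarrow>\<^sub>E omega_idx N. \<forall>e\<in>ends D. \<kappa> (partner D e) = \<kappa> e}"

definition endval :: "nat \<Rightarrow> jdiag \<Rightarrow> (jend \<Rightarrow> (nat \<times> nat) option) \<Rightarrow> jend \<Rightarrow> 'k::field mat" where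
  "endval N D \<kappa> e = (if end_lt e (partner D e) then omega_fst N (\<kappa> e) else omega_snd N (\<kappa> e))"

definition state_weight :: "nat \<Rightarrow> jdiag \<Rightarrow> (jend \<Rightarrow> (nat \<times> nat) option) \<Rightarrow> 'k::field" where
  "state_weight N D \<kappa> =
     (\<Prod>e \<in> {e \<in> ends D. end_lt e (partner D e)}. omega_coef N (\<kappa> e)) *
     (\<Prod>v<nverts D. - trform N (mbracket N (endval N D \<kappa> (TV v 0)) (endval N D \<kappa> (TV v 1)))
                                (endval N D \<kappa> (TV v 2)))"

definition strand_val :: "nat \<Rightarrow> jdiag \<Rightarrow> (jend \<Rightarrow> (nat \<times> nat) option) \<Rightarrow> nat \<Rightarrow> 'k::field mat" where
  "strand_val N D \<kappa> s = mprod N (map (\<lambda>p. endval N D \<kappa> (SP s p)) [0..<npts D s])"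

definition Wst :: "nat \<Rightarrow> jdiag \<Rightarrow> 'k::field tens2" where
  "Wst N D = (\<lambda>i j k l. \<Sum>\<kappa>\<in>states N D.
      state_weight N D \<kappa> * strand_val N D \<kappa> 0 i j * strand_val N D \<kappa> 1 k l)"

definition tmul :: "nat \<Rightarrow> 'k::field tens2 \<Rightarrow> 'k tens2 \<Rightarrow> 'k tens2" where
  "tmul N S T = (\<lambda>i j k l. \<Sum>m<N. \<Sum>n<N. S i m k n * T m j n l)"

definition tid :: "nat \<Rightarrow> 'k::field tens2" where
  "tid N = (\<lambda>i j k l. mid N i j * mid N k l)"

text \<open>Image of the linear map A(\<down>\<down>)_K \<rightarrow> End(K^N)^{\<otimes>2}: the K-span of the values on diagrams.\<close>
definition Wst_image :: "nat \<Rightarrow> 'k::field tens2 set" where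
  "Wst_image N = {(\<lambda>i j k l. \<Sum>D\<in>F. c D * Wst N D i j k l) | F c.
                    finite F \<and> (\<forall>D\<in>F. wf_jdiag D)}"

definition comm_subalgebra :: "nat \<Rightarrow> 'k::field tens2 set \<Rightarrow> bool" where
  "comm_subalgebra N A \<longleftrightarrow>
     tid N \<in> A \<and>
     (\<forall>S\<in>A. \<forall>T\<in>A. (\<lambda>i j k l. S i j k l + T i j k l) \<in> A) \<and>
     (\<forall>c. \<forall>S\<in>A. (\<lambda>i j k l. c * S i j k l) \<in> A) \<and>
     (\<forall>S\<in>A. \<forall>T\<in>A. tmul N S T \<in> A) \<and>
     (\<forall>S\<in>A. \<forall>T\<in>A. tmul N S T = tmul N T S)"

end

theory Submission
  imports Defs
begin

definition ind :: "nat \<Rightarrow> nat \<Rightarrow> int" where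
  "ind i y = (if y = i then 1 else 0)"

definition haschg :: "nat \<Rightarrow> 'k::field mat \<Rightarrow> (nat \<Rightarrow> int) \<Rightarrow> bool" where
  "haschg N M c \<longleftrightarrow> (\<forall>a b. M a b \<noteq> 0 \<longrightarrow> a < N \<and> b < N \<and> (\<forall>y. ind a y - ind b y = c y))"

lemma haschg_mid: "haschg N (mid N) (\<lambda>_. 0)"
  by (auto simp: haschg_def mid_def split: if_splits)

lemma haschg_mE: "i < N \<Longrightarrow> j < N \<Longrightarrow> haschg N (mE i j) (\<lambda>y. ind i y - ind j y)"
  by (auto simp: haschg_def mE_def split: if_splits)

lemma haschg_mmul:
  assumes "haschg N A c1" "haschg N B c2"
  shows "haschg N (mmul N A B) (\<lambda>y. c1 y + c2 y)"
  unfolding haschg_def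
proof (intro allI impI)
  fix a b assume "mmul N A B a b \<noteq> 0"
  then obtain m where "m < N" "A a m * B m b \<noteq> 0"
    unfolding mmul_def by (meson lessThan_iff sum.not_neutral_contains_not_neutral)
  then have "A a m \<noteq> 0" "B m b \<noteq> 0" by auto
  have 1: "a < N \<and> (\<forall>y. ind a y - ind m y = c1 y)" using assms(1) \<open>A a m \<noteq> 0\<close> unfolding haschg_def by blast
  have 2: "b < N \<and> (\<forall>y. ind m y - ind b y = c2 y)" using assms(2) \<open>B m b \<noteq> 0\<close> unfolding haschg_def by blast
  show "a < N \<and> b < N \<and> (\<forall>y. ind a y - ind b y = c1 y + c2 y)"
  proof (intro conjI allI)
    fix y
    have "c1 y + c2 y = (ind a y - ind m y) + (ind m y - ind b y)" using 1 2 by simp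
    then show "ind a y - ind b y = c1 y + c2 y" by simp
  qed (use 1 2 in auto)
qed

lemma haschg_mprod:
  "(\<And>x. x \<in> set xs \<Longrightarrow> haschg N (f x) (c x)) \<Longrightarrow>
    haschg N (mprod N (map f xs)) (\<lambda>y. \<Sum>x\<leftarrow>xs. c x y)"
proof (induction xs)
  case Nil
  then show ?case using haschg_mid by simp
next
  case (Cons a xs)
  then show ?case using haschg_mmul[of N "f a" "c a" "mprod N (map f xs)"] by simp
qed

lemma trform_chg:
  assumes "haschg N A c1" "haschg N B c2" "trform N A B \<noteq> 0"
  shows "c1 y + c2 y = 0"
proof -
  obtain i where "i < N" "(\<Sum>j<N. A i j * B j i) \<noteq> 0"
    using assms(3) unfolding trform_def by (meson lessThan_iff sum.not_neutral_contains_not_neutral)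
  then obtain j where "j < N" "A i j * B j i \<noteq> 0"
    by (meson lessThan_iff sum.not_neutral_contains_not_neutral)
  then have "A i j \<noteq> 0" "B j i \<noteq> 0" by auto
  then have "ind i y - ind j y = c1 y" "ind j y - ind i y = c2 y"
    using assms(1,2) unfolding haschg_def by blast+
  then show ?thesis by linarith
qed

lemma haschg_mbracket:
  assumes "haschg N A c1" "haschg N B c2"
  shows "haschg N (mbracket N A B) (\<lambda>y. c1 y + c2 y)"
proof -
  have h1: "haschg N (mmul N A B) (\<lambda>y. c1 y + c2 y)" by (rule haschg_mmul[OF assms])
  have h2: "haschg N (mmul N B A) (\<lambda>y. c2 y + c1 y)" by (rule haschg_mmul[OF assms(2,1)])
  show ?thesis unfolding haschg_def mbracket_def
  proof (intro allI impI)
    fix a b assume "mmul N A B a b - mmul N B A a b \<noteq> 0"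
    then have "mmul N A B a b \<noteq> 0 \<or> mmul N B A a b \<noteq> 0" by auto
    then show "a < N \<and> b < N \<and> (\<forall>y. ind a y - ind b y = c1 y + c2 y)"
      using h1 h2 unfolding haschg_def by (metis add.commute)
  qed
qed

fun chg :: "(nat \<times> nat) option \<Rightarrow> bool \<Rightarrow> nat \<Rightarrow> int" where
  "chg None b y = 0"
| "chg (Some (i, j)) b y = (if b then ind i y - ind j y else ind j y - ind i y)"

definition echg :: "jdiag \<Rightarrow> (jend \<Rightarrow> (nat \<times> nat) option) \<Rightarrow> jend \<Rightarrow> nat \<Rightarrow> int" where
  "echg D \<kappa> e y = chg (\<kappa> e) (end_lt e (partner D e)) y"

lemma states_mem: "\<kappa> \<in> states N D \<Longrightarrow> e \<in> ends D \<Longrightarrow> \<kappa> e \<in> omega_idx N"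
  unfolding states_def by auto

lemma states_partner: "\<kappa> \<in> states N D \<Longrightarrow> e \<in> ends D \<Longrightarrow> \<kappa> (partner D e) = \<kappa> e"
  unfolding states_def by auto

lemma chg_None_fun: "chg None b = (\<lambda>_. 0)" by auto
lemma chg_Some_fun: "chg (Some (i,j)) True = (\<lambda>y. ind i y - ind j y)"
  "chg (Some (i,j)) False = (\<lambda>y. ind j y - ind i y)" by auto

lemma haschg_endval:
  assumes "\<kappa> \<in> states N D" "e \<in> ends D"
  shows "haschg N (endval N D \<kappa> e :: 'k::field mat) (echg D \<kappa> e)"
proof -
  have "\<kappa> e \<in> omega_idx N" by (rule states_mem[OF assms])
  then show ?thesis
    unfolding endval_def echg_def omega_idx_def
    by (auto simp: haschg_mid haschg_mE chg_None_fun chg_Some_fun)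
qed

lemma end_lt_flip: "e \<noteq> e' \<Longrightarrow> end_lt e' e = (\<not> end_lt e e')"
  by (cases e; cases e'; auto)

lemma echg_partner:
  assumes "wf_jdiag D" "\<kappa> \<in> states N D" "e \<in> ends D"
  shows "echg D \<kappa> (partner D e) y = - echg D \<kappa> e y"
proof -
  have p: "partner D (partner D e) = e" "partner D e \<noteq> e"
    using assms(1,3) unfolding wf_jdiag_def by auto
  have k: "\<kappa> (partner D e) = \<kappa> e" by (rule states_partner[OF assms(2,3)])
  have l: "end_lt (partner D e) e = (\<not> end_lt e (partner D e))"
    using end_lt_flip p(2) by metis
  show ?thesis unfolding echg_def k p(1) l
    by (cases "\<kappa> e") auto
qed

lemma sum_invol_zero:
  fixes g :: "'a \<Rightarrow> int"
  assumes "\<forall>x\<in>A. f x \<in> A \<and> f (f x) = x \<and> g (f x) = - g x"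
  shows "sum g A = 0"
proof -
  have bij: "bij_betw f A A"
    by (rule bij_betw_byWitness[where f'=f]) (use assms in auto)
  have "sum g A = sum (\<lambda>x. g (f x)) A" using sum.reindex_bij_betw[OF bij, of g] by simp
  also have "\<dots> = sum (\<lambda>x. - g x) A" by (rule sum.cong) (use assms in auto)
  also have "\<dots> = - sum g A" by (simp add: sum_negf)
  finally show ?thesis by simp
qed

lemma ends_decomp:
  "ends D = (\<lambda>(v,i). TV v i) ` ({..<nverts D} \<times> {..<3}) \<union>
            (SP 0 ` {..<npts D 0} \<union> SP 1 ` {..<npts D 1})"
  unfolding ends_def by (auto simp: less_Suc_eq numeral_2_eq_2)

lemma sum_ends:
  fixes g :: "jend \<Rightarrow> 'a::comm_monoid_add"
  shows "sum g (ends D) = (\<Sum>v<nverts D. \<Sum>i<3. g (TV v i)) +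
     ((\<Sum>p<npts D 0. g (SP 0 p)) + (\<Sum>p<npts D 1. g (SP 1 p)))"
proof -
  have inj1: "inj_on (\<lambda>(v,i). TV v i) ({..<nverts D} \<times> {..<3})" by (auto simp: inj_on_def)
  have "sum g (ends D) = sum g ((\<lambda>(v,i). TV v i) ` ({..<nverts D} \<times> {..<3})) +
        sum g (SP 0 ` {..<npts D 0} \<union> SP 1 ` {..<npts D 1})"
    unfolding ends_decomp by (rule sum.union_disjoint) auto
  also have "sum g (SP 0 ` {..<npts D 0} \<union> SP 1 ` {..<npts D 1}) =
      sum g (SP 0 ` {..<npts D 0}) + sum g (SP 1 ` {..<npts D 1})"
    by (rule sum.union_disjoint) auto
  also have "sum g ((\<lambda>(v,i). TV v i) ` ({..<nverts D} \<times> {..<3})) = (\<Sum>v<nverts D. \<Sum>i<3. g (TV v i))"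
    unfolding sum.reindex[OF inj1] by (simp add: sum.cartesian_product case_prod_beta')
  also have "sum g (SP 0 ` {..<npts D 0}) = (\<Sum>p<npts D 0. g (SP 0 p))"
    by (simp add: sum.reindex inj_on_def)
  also have "sum g (SP 1 ` {..<npts D 1}) = (\<Sum>p<npts D 1. g (SP 1 p))"
    by (simp add: sum.reindex inj_on_def)
  finally show ?thesis .
qed


lemma sum_list_upt0: "(\<Sum>x\<leftarrow>[0..<n]. f x) = (\<Sum>x<n. f x)"
  by (metis atLeast0LessThan atLeastLessThan_upt sum_set_upt_conv_sum_list_nat)

lemma Wst_term:
  assumes wf: "wf_jdiag D" and \<kappa>: "\<kappa> \<in> states N D"
    and nz: "state_weight N D \<kappa> * strand_val N D \<kappa> 0 i j * strand_val N D \<kappa> 1 k l \<noteq> (0::'k::field)"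
  shows "i<N \<and> j<N \<and> k<N \<and> l<N \<and> ((i=j \<and> k=l) \<or> (i=l \<and> k=j))"
proof -
  have sw: "state_weight N D \<kappa> \<noteq> (0::'k)" and s0: "strand_val N D \<kappa> 0 i j \<noteq> (0::'k)"
    and s1: "strand_val N D \<kappa> 1 k l \<noteq> (0::'k)" using nz by auto
  have vp: "(\<Prod>v<nverts D. - trform N (mbracket N (endval N D \<kappa> (TV v 0)) (endval N D \<kappa> (TV v 1)))
                                (endval N D \<kappa> (TV v 2))) \<noteq> (0::'k)"
    using sw unfolding state_weight_def by auto
  have vert: "(\<Sum>t<3. echg D \<kappa> (TV v t) y) = 0" if v: "v < nverts D" for v y
  proof -
    have tr: "trform N (mbracket N (endval N D \<kappa> (TV v 0)) (endval N D \<kappa> (TV v 1)))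
                                (endval N D \<kappa> (TV v 2)) \<noteq> (0::'k)"
      using vp v by (auto simp: prod_zero_iff)
    have e: "TV v t \<in> ends D" if "t<3" for t using v that unfolding ends_def by auto
    have h: "haschg N (endval N D \<kappa> (TV v t) :: 'k mat) (echg D \<kappa> (TV v t))" if "t<3" for t
      using haschg_endval[OF \<kappa> e[OF that]] .
    have hb: "haschg N (mbracket N (endval N D \<kappa> (TV v 0)) (endval N D \<kappa> (TV v 1)) :: 'k mat)
       (\<lambda>y. echg D \<kappa> (TV v 0) y + echg D \<kappa> (TV v 1) y)"
      by (rule haschg_mbracket) (rule h; simp)+
    have "(echg D \<kappa> (TV v 0) y + echg D \<kappa> (TV v 1) y) + echg D \<kappa> (TV v 2) y = 0"
      by (rule trform_chg[OF hb h tr]) simp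
    then show ?thesis by (simp add: eval_nat_numeral)
  qed
  have strand: "haschg N (strand_val N D \<kappa> s :: 'k mat) (\<lambda>y. \<Sum>p<npts D s. echg D \<kappa> (SP s p) y)"
    if s: "s < 2" for s
  proof -
    have "haschg N (mprod N (map (\<lambda>p. endval N D \<kappa> (SP s p)) [0..<npts D s]) :: 'k mat)
       (\<lambda>y. \<Sum>p\<leftarrow>[0..<npts D s]. echg D \<kappa> (SP s p) y)"
    proof (rule haschg_mprod)
      fix p assume "p \<in> set [0..<npts D s]"
      then have "SP s p \<in> ends D" using s unfolding ends_def by auto
      then show "haschg N (endval N D \<kappa> (SP s p) :: 'k mat) (echg D \<kappa> (SP s p))"
        by (rule haschg_endval[OF \<kappa>])
    qed
    then show ?thesis unfolding strand_val_def sum_list_upt0 .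
  qed
  have c0: "i < N \<and> j < N \<and> (\<forall>y. ind i y - ind j y = (\<Sum>p<npts D 0. echg D \<kappa> (SP 0 p) y))"
    using strand[of 0] s0 unfolding haschg_def by auto
  have c1: "k < N \<and> l < N \<and> (\<forall>y. ind k y - ind l y = (\<Sum>p<npts D 1. echg D \<kappa> (SP 1 p) y))"
    using strand[of 1] s1 unfolding haschg_def by auto
  have tot: "sum (\<lambda>e. echg D \<kappa> e y) (ends D) = 0" for y
    by (rule sum_invol_zero[where f="partner D"])
       (use wf echg_partner[OF wf \<kappa>] in \<open>auto simp: wf_jdiag_def\<close>)
  have eq: "(ind i y - ind j y) + (ind k y - ind l y) = 0" for y
  proof -
    have "0 = sum (\<lambda>e. echg D \<kappa> e y) (ends D)" using tot by simp
    also have "\<dots> = (\<Sum>v<nverts D. \<Sum>t<3. echg D \<kappa> (TV v t) y) +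
     ((\<Sum>p<npts D 0. echg D \<kappa> (SP 0 p) y) + (\<Sum>p<npts D 1. echg D \<kappa> (SP 1 p) y))"
      by (rule sum_ends)
    also have "(\<Sum>v<nverts D. \<Sum>t<3. echg D \<kappa> (TV v t) y) = 0"
      using vert by simp
    finally show ?thesis using c0 c1 by simp
  qed
  have "(i=j \<and> k=l) \<or> (i=l \<and> k=j)"
    using eq[of i] eq[of j] eq[of k] eq[of l] unfolding ind_def
    by (auto split: if_splits)
  then show ?thesis using c0 c1 by auto
qed

lemma Wst_nz:
  assumes "wf_jdiag D" "Wst N D i j k l \<noteq> (0::'k::field)"
  shows "i<N \<and> j<N \<and> k<N \<and> l<N \<and> ((i=j \<and> k=l) \<or> (i=l \<and> k=j))"
proof -
  obtain \<kappa> where "\<kappa> \<in> states N D"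
     "state_weight N D \<kappa> * strand_val N D \<kappa> 0 i j * strand_val N D \<kappa> 1 k l \<noteq> (0::'k)"
    using assms(2) unfolding Wst_def by (meson sum.not_neutral_contains_not_neutral)
  then show ?thesis using Wst_term[OF assms(1)] by blast
qed


definition tau :: "nat \<Rightarrow> nat \<Rightarrow> nat \<Rightarrow> nat" where
  "tau a b x = (if x = a then b else if x = b then a else x)"

lemma tau_tau[simp]: "tau a b (tau a b x) = x"
  unfolding tau_def by auto

lemma tau_eq_iff: "(tau a b x = y) = (x = tau a b y)"
  unfolding tau_def by auto

lemma tau_lt: "a < N \<Longrightarrow> b < N \<Longrightarrow> (tau a b x < N) = (x < N)"
  unfolding tau_def by auto

lemma tau_bij: "a < N \<Longrightarrow> b < N \<Longrightarrow> bij_betw (tau a b) {..<N} {..<N}"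
  by (rule bij_betw_byWitness[where f'="tau a b"]) (auto simp: tau_lt)

definition cj :: "nat \<Rightarrow> nat \<Rightarrow> 'k mat \<Rightarrow> 'k mat" where
  "cj a b M = (\<lambda>x y. M (tau a b x) (tau a b y))"

lemma cj_mE: "cj a b (mE i j :: 'k::field mat) = mE (tau a b i) (tau a b j)"
  unfolding cj_def mE_def by (intro ext) (simp add: tau_eq_iff)

lemma cj_mid: "a < N \<Longrightarrow> b < N \<Longrightarrow> cj a b (mid N :: 'k::field mat) = mid N"
  unfolding cj_def mid_def by (intro ext) (auto simp: tau_lt tau_eq_iff)

lemma sum_tau:
  assumes "a < N" "b < N"
  shows "(\<Sum>m<N. g (tau a b m)) = (\<Sum>m<N. g m)"
  using sum.reindex_bij_betw[OF tau_bij[OF assms], of g] .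

lemma cj_mmul:
  assumes "a < N" "b < N"
  shows "mmul N (cj a b A) (cj a b B) = cj a b (mmul N A B :: 'k::field mat)"
  unfolding cj_def mmul_def
  by (intro ext) (rule sum_tau[OF assms, of "\<lambda>m. A (tau a b _) m * B m (tau a b _)"])

lemma cj_mbracket:
  assumes "a < N" "b < N"
  shows "mbracket N (cj a b A) (cj a b B) = cj a b (mbracket N A B :: 'k::field mat)"
  unfolding mbracket_def cj_mmul[OF assms]
  by (simp add: cj_def)

lemma cj_mprod:
  assumes "a < N" "b < N"
  shows "mprod N (map (cj a b) Ms) = cj a b (mprod N Ms :: 'k::field mat)"
  by (induction Ms) (simp_all add: cj_mid[OF assms] cj_mmul[OF assms])

lemma cj_trform:
  assumes "a < N" "b < N"
  shows "trform N (cj a b A) (cj a b B) = (trform N A B :: 'k::field)"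
proof -
  have "trform N (cj a b A) (cj a b B) = (\<Sum>i<N. \<Sum>j<N. A (tau a b i) (tau a b j) * B (tau a b j) (tau a b i))"
    unfolding trform_def cj_def by simp
  also have "\<dots> = (\<Sum>i<N. \<Sum>j<N. A (tau a b i) j * B j (tau a b i))"
    by (rule sum.cong[OF refl]) (rule sum_tau[OF assms, of "\<lambda>j. A (tau a b _) j * B j (tau a b _)"])
  also have "\<dots> = (\<Sum>i<N. \<Sum>j<N. A i j * B j i)"
    by (rule sum_tau[OF assms, of "\<lambda>i. \<Sum>j<N. A i j * B j i"])
  finally show ?thesis unfolding trform_def .
qed

definition tk :: "nat \<Rightarrow> nat \<Rightarrow> jdiag \<Rightarrow> (jend \<Rightarrow> (nat \<times> nat) option) \<Rightarrow> (jend \<Rightarrow> (nat \<times> nat) option)" where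
  "tk a b D \<kappa> = restrict (\<lambda>e. map_option (map_prod (tau a b) (tau a b)) (\<kappa> e)) (ends D)"

lemma tk_states:
  assumes "a < N" "b < N" "wf_jdiag D" "\<kappa> \<in> states N D"
  shows "tk a b D \<kappa> \<in> states N D"
proof -
  have m: "map_option (map_prod (tau a b) (tau a b)) x \<in> omega_idx N" if "x \<in> omega_idx N" for x
    using that assms(1,2) unfolding omega_idx_def by (auto simp: tau_lt)
  show ?thesis
    using assms(3,4) m unfolding states_def tk_def wf_jdiag_def by (auto simp: PiE_iff)
qed

lemma tk_tk:
  assumes "\<kappa> \<in> states N D"
  shows "tk a b D (tk a b D \<kappa>) = \<kappa>"
proof
  fix e
  show "tk a b D (tk a b D \<kappa>) e = \<kappa> e"
  proof (cases "e \<in> ends D")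
    case True
    then show ?thesis unfolding tk_def by (simp add: option.map_comp prod.map_comp comp_def option.map_ident)
  next
    case False
    then show ?thesis using assms unfolding tk_def states_def by (auto simp: PiE_iff extensional_def)
  qed
qed

lemma tk_bij:
  assumes "a < N" "b < N" "wf_jdiag D"
  shows "bij_betw (tk a b D) (states N D) (states N D)"
  by (rule bij_betw_byWitness[where f'="tk a b D"]) (auto simp: tk_tk tk_states[OF assms])

lemma endval_tk:
  assumes "a < N" "b < N" "\<kappa> \<in> states N D" "e \<in> ends D"
  shows "endval N D (tk a b D \<kappa>) e = cj a b (endval N D \<kappa> e :: 'k::field mat)"
proof -
  have "\<kappa> e \<in> omega_idx N" by (rule states_mem[OF assms(3,4)])
  then show ?thesis using assms(4)
    unfolding endval_def tk_def omega_idx_def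
    by (auto simp: cj_mid[OF assms(1,2)] cj_mE)
qed

lemma state_weight_tk:
  assumes "a < N" "b < N" "\<kappa> \<in> states N D"
  shows "state_weight N D (tk a b D \<kappa>) = (state_weight N D \<kappa> :: 'k::field)"
proof -
  have 1: "omega_coef N (tk a b D \<kappa> e) = (omega_coef N (\<kappa> e) :: 'k)" if "e \<in> ends D" for e
    using that unfolding tk_def by (cases "\<kappa> e") auto
  have e: "TV v t \<in> ends D" if "v < nverts D" "t<3" for v t using that unfolding ends_def by auto
  show ?thesis unfolding state_weight_def
    apply (rule arg_cong2[where f="(*)"])
     apply (rule prod.cong[OF refl]) apply (simp add: 1)
    apply (rule prod.cong[OF refl])
    apply (simp add: endval_tk[OF assms e] cj_mbracket[OF assms(1,2)] cj_trform[OF assms(1,2)])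
    done
qed

lemma strand_val_tk:
  assumes "a < N" "b < N" "\<kappa> \<in> states N D" "s < 2"
  shows "strand_val N D (tk a b D \<kappa>) s = cj a b (strand_val N D \<kappa> s :: 'k::field mat)"
proof -
  have e: "SP s p \<in> ends D" if "p < npts D s" for p using that assms(4) unfolding ends_def by auto
  have mq: "map (\<lambda>p. endval N D (tk a b D \<kappa>) (SP s p)) [0..<npts D s] =
        map (cj a b) (map (\<lambda>p. endval N D \<kappa> (SP s p) :: 'k mat) [0..<npts D s])"
    by (auto simp: endval_tk[OF assms(1-3) e])
  show ?thesis unfolding strand_val_def mq by (rule cj_mprod[OF assms(1,2)])
qed

lemma Wst_tau:
  assumes "a < N" "b < N" "wf_jdiag D"
  shows "Wst N D (tau a b i) (tau a b j) (tau a b k) (tau a b l) = (Wst N D i j k l :: 'k::field)"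
proof -
  let ?F = "\<lambda>\<kappa>. state_weight N D \<kappa> * strand_val N D \<kappa> 0 i j * strand_val N D \<kappa> 1 k l :: 'k"
  have "Wst N D i j k l = sum (\<lambda>\<kappa>. ?F (tk a b D \<kappa>)) (states N D)"
    unfolding Wst_def using sum.reindex_bij_betw[OF tk_bij[OF assms], of ?F] by simp
  also have "\<dots> = Wst N D (tau a b i) (tau a b j) (tau a b k) (tau a b l)"
    unfolding Wst_def
    by (rule sum.cong[OF refl])
       (simp add: state_weight_tk[OF assms(1,2)] strand_val_tk[OF assms(1,2)] cj_def)
  finally show ?thesis by simp
qed


definition Qp :: "nat \<Rightarrow> 'k::field tens2 \<Rightarrow> bool" where
  "Qp N T \<longleftrightarrow> (\<forall>i j k l. T i j k l \<noteq> 0 \<longrightarrow> i<N \<and> j<N \<and> k<N \<and> l<N \<and> ((i=j \<and> k=l) \<or> (i=l \<and> k=j))) \<and>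
     (\<forall>a b i j k l. a<N \<longrightarrow> b<N \<longrightarrow> T (tau a b i) (tau a b j) (tau a b k) (tau a b l) = T i j k l)"

lemma Qp_lin:
  assumes "finite I" "\<forall>x\<in>I. wf_jdiag (f x)"
  shows "Qp N (\<lambda>i j k l. \<Sum>x\<in>I. c x * Wst N (f x) i j k l :: 'k::field)"
proof -
  have A: "\<forall>i j k l. (\<Sum>x\<in>I. c x * Wst N (f x) i j k l :: 'k) \<noteq> 0 \<longrightarrow> i<N \<and> j<N \<and> k<N \<and> l<N \<and> ((i=j \<and> k=l) \<or> (i=l \<and> k=j))"
  proof (intro allI impI)
    fix i j k l assume "(\<Sum>x\<in>I. c x * Wst N (f x) i j k l :: 'k) \<noteq> 0"
    then obtain x where "x \<in> I" "c x * Wst N (f x) i j k l \<noteq> 0"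
      by (meson sum.not_neutral_contains_not_neutral)
    then show "i<N \<and> j<N \<and> k<N \<and> l<N \<and> ((i=j \<and> k=l) \<or> (i=l \<and> k=j))"
      using Wst_nz[of "f x" N i j k l] assms(2) by auto
  qed
  have B: "\<forall>a b i j k l. a<N \<longrightarrow> b<N \<longrightarrow> (\<Sum>x\<in>I. c x * Wst N (f x) (tau a b i) (tau a b j) (tau a b k) (tau a b l) :: 'k) =
       (\<Sum>x\<in>I. c x * Wst N (f x) i j k l)"
    using assms(2) by (auto intro!: sum.cong simp: Wst_tau)
  show ?thesis unfolding Qp_def using A B by simp
qed

lemma span_gen:
  assumes "finite I" "\<forall>x\<in>I. wf_jdiag (f x)"
  shows "(\<lambda>i j k l. \<Sum>x\<in>I. a x * Wst N (f x) i j k l :: 'k::field) \<in> Wst_image N"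
proof -
  define c where "c D = (\<Sum>x\<in>{x\<in>I. f x = D}. a x)" for D
  have "(\<lambda>i j k l. \<Sum>x\<in>I. a x * Wst N (f x) i j k l :: 'k) = (\<lambda>i j k l. \<Sum>D\<in>f ` I. c D * Wst N D i j k l)"
  proof (intro ext)
    fix i j k l
    have "(\<Sum>x\<in>I. a x * Wst N (f x) i j k l :: 'k) =
       (\<Sum>D\<in>f ` I. \<Sum>x\<in>{x\<in>I. f x = D}. a x * Wst N (f x) i j k l)"
      by (rule sum.image_gen[OF assms(1)])
    also have "\<dots> = (\<Sum>D\<in>f ` I. c D * Wst N D i j k l)"
      unfolding c_def sum_distrib_right by (intro sum.cong refl) auto
    finally show "(\<Sum>x\<in>I. a x * Wst N (f x) i j k l :: 'k) = (\<Sum>D\<in>f ` I. c D * Wst N D i j k l)" .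
  qed
  moreover have "finite (f ` I)" "\<forall>D\<in>f ` I. wf_jdiag D" using assms by auto
  ultimately show ?thesis unfolding Wst_image_def by blast
qed

lemma Qp_image: "T \<in> Wst_image N \<Longrightarrow> Qp N T"
  unfolding Wst_image_def using Qp_lin[where f=id] by auto

lemma QpD1: "Qp N T \<Longrightarrow> T i j k l \<noteq> 0 \<Longrightarrow> i<N \<and> j<N \<and> k<N \<and> l<N \<and> ((i=j \<and> k=l) \<or> (i=l \<and> k=j))"
  unfolding Qp_def by blast

lemma QpD2: "Qp N T \<Longrightarrow> a<N \<Longrightarrow> b<N \<Longrightarrow> T (tau a b i) (tau a b j) (tau a b k) (tau a b l) = T i j k l"
  unfolding Qp_def by blast

lemma tmul_eval:
  assumes "Qp N S"
  shows "tmul N S T i j k l = (if i<N \<and> k<N then (if i = k then S i i i i * T i j i l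
           else S i i k k * T i j k l + S i k k i * T k j i l) else 0)"
proof -
  have z: "S i m k n = 0" if "\<not> ((m=i \<and> n=k) \<or> (m=k \<and> n=i) )" for m n
    using QpD1[OF assms, of i m k n] that by auto
  have z2: "S i m k n = 0" if "\<not> (i<N \<and> k<N)" for m n
    using QpD1[OF assms, of i m k n] that by auto
  show ?thesis
  proof (cases "i<N \<and> k<N")
    case False
    then show ?thesis by (subst if_not_P[OF False] if_False) (simp add: tmul_def z2)
  next
    case True
    show ?thesis
    proof (cases "i = k")
      case True
      have "tmul N S T i j k l = (\<Sum>m<N. \<Sum>n<N. if m = i then (if n = i then S i i i i * T i j i l else 0) else 0)"
        unfolding tmul_def using z True by (intro sum.cong refl) auto
      also have "\<dots> = S i i i i * T i j i l" using \<open>i<N \<and> k<N\<close> by (simp add: sum.If_cases)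
      finally show ?thesis using True \<open>i<N \<and> k<N\<close> by simp
    next
      case False
      have "tmul N S T i j k l = (\<Sum>m<N. \<Sum>n<N. (if m = i then (if n = k then S i i k k * T i j k l else 0) else 0)
              + (if m = k then (if n = i then S i k k i * T k j i l else 0) else 0))"
        unfolding tmul_def using z False by (intro sum.cong refl) auto
      also have "\<dots> = S i i k k * T i j k l + S i k k i * T k j i l"
        using False \<open>i<N \<and> k<N\<close> by (simp add: sum.If_cases sum.distrib)
      finally show ?thesis using False \<open>i<N \<and> k<N\<close> by simp
    qed
  qed
qed

lemma Qp_comm:
  assumes S: "Qp N S" and T: "Qp N T"
  shows "tmul N S T = tmul N (T :: 'k::field tens2) S"
proof (intro ext)
  fix i j k l
  show "tmul N S T i j k l = tmul N T S i j k l"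
  proof (cases "i<N \<and> k<N")
    case False
    then show ?thesis by (simp only: tmul_eval[OF S] tmul_eval[OF T] if_not_P[OF False] if_False)
  next
    case ik: True
    have t1: "tau i k k = i" "tau i k i = k" unfolding tau_def by auto
    have sym: "X k i i k = X i k k i" "X k k i i = X i i k k" if "Qp N X" for X :: "'k tens2"
    proof -
      have "X (tau i k k) (tau i k i) (tau i k i) (tau i k k) = X k i i k"
        by (rule QpD2[OF that]) (use ik in auto)
      then show "X k i i k = X i k k i" unfolding t1 by simp
      have "X (tau i k k) (tau i k k) (tau i k i) (tau i k i) = X k k i i"
        by (rule QpD2[OF that]) (use ik in auto)
      then show "X k k i i = X i i k k" unfolding t1 by simp
    qed
    show ?thesis
    proof (cases "i = k")
      case True
      have "T i j i l = 0 \<and> S i j i l = 0 \<or> (j = i \<and> l = i)"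
        using QpD1[OF S, of i j i l] QpD1[OF T, of i j i l] by auto
      then show ?thesis using True ik by (auto simp: tmul_eval[OF S] tmul_eval[OF T])
    next
      case False
      have c: "(j = i \<and> l = k) \<or> (j = k \<and> l = i) \<or>
               (T i j k l = 0 \<and> T k j i l = 0 \<and> S i j k l = 0 \<and> S k j i l = 0)"
        using QpD1[OF S, of i j k l] QpD1[OF T, of i j k l]
              QpD1[OF S, of k j i l] QpD1[OF T, of k j i l] by auto
      then show ?thesis using False ik sym[OF S] sym[OF T]
        by (auto simp: tmul_eval[OF S] tmul_eval[OF T] algebra_simps)
    qed
  qed
qed


definition shft :: "jdiag \<Rightarrow> jend \<Rightarrow> jend" where
  "shft D1 e = (case e of TV v i \<Rightarrow> TV (v + nverts D1) i | SP s p \<Rightarrow> SP s (p + npts D1 s))"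
definition unshft :: "jdiag \<Rightarrow> jend \<Rightarrow> jend" where
  "unshft D1 e = (case e of TV v i \<Rightarrow> TV (v - nverts D1) i | SP s p \<Rightarrow> SP s (p - npts D1 s))"
definition in1 :: "jdiag \<Rightarrow> jend \<Rightarrow> bool" where
  "in1 D1 e = (case e of TV v i \<Rightarrow> v < nverts D1 | SP s p \<Rightarrow> p < npts D1 s)"

definition stack :: "jdiag \<Rightarrow> jdiag \<Rightarrow> jdiag" where
  "stack D1 D2 = \<lparr>nverts = nverts D1 + nverts D2, npts = (\<lambda>s. npts D1 s + npts D2 s),
     partner = (\<lambda>e. if in1 D1 e then partner D1 e else shft D1 (partner D2 (unshft D1 e)))\<rparr>"

lemma unshft_shft[simp]: "unshft D1 (shft D1 e) = e"
  unfolding unshft_def shft_def by (cases e) auto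

lemma in1_shft[simp]: "\<not> in1 D1 (shft D1 e)"
  unfolding in1_def shft_def by (cases e) auto

lemma in1_ends: "e \<in> ends D1 \<Longrightarrow> in1 D1 e"
  unfolding in1_def ends_def by auto

lemma shft_inj: "inj (shft D1)"
  by (metis injI unshft_shft)

lemma end_lt_shft[simp]: "end_lt (shft D1 e) (shft D1 e') = end_lt e e'"
  unfolding shft_def by (cases e; cases e') auto

lemma ends_stack: "ends (stack D1 D2) = ends D1 \<union> shft D1 ` ends D2"
proof
  show "ends (stack D1 D2) \<subseteq> ends D1 \<union> shft D1 ` ends D2"
  proof
    fix e assume e: "e \<in> ends (stack D1 D2)"
    show "e \<in> ends D1 \<union> shft D1 ` ends D2"
    proof (cases e)
      case (TV v i)
      show ?thesis
      proof (cases "v < nverts D1")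
        case True then show ?thesis using e TV unfolding ends_def stack_def by auto
      next
        case False
        then have "e = shft D1 (TV (v - nverts D1) i)" "TV (v - nverts D1) i \<in> ends D2"
          using e TV unfolding ends_def stack_def shft_def by auto
        then show ?thesis by blast
      qed
    next
      case (SP s p)
      show ?thesis
      proof (cases "p < npts D1 s")
        case True then show ?thesis using e SP unfolding ends_def stack_def by auto
      next
        case False
        then have "e = shft D1 (SP s (p - npts D1 s))" "SP s (p - npts D1 s) \<in> ends D2"
          using e SP unfolding ends_def stack_def shft_def by auto
        then show ?thesis by blast
      qed
    qed
  qed
next
  show "ends D1 \<union> shft D1 ` ends D2 \<subseteq> ends (stack D1 D2)"
    unfolding ends_def stack_def shft_def by auto
qed

lemma partner_stack1: "e \<in> ends D1 \<Longrightarrow> partner (stack D1 D2) e = partner D1 e"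
  unfolding stack_def by (simp add: in1_ends)

lemma partner_stack2: "partner (stack D1 D2) (shft D1 e) = shft D1 (partner D2 e)"
  unfolding stack_def by simp

lemma shft_notin: "shft D1 e \<notin> ends D1"
  using in1_ends in1_shft by blast

lemma wf_stack:
  assumes "wf_jdiag D1" "wf_jdiag D2"
  shows "wf_jdiag (stack D1 D2)"
  unfolding wf_jdiag_def ends_stack
proof
  fix e assume "e \<in> ends D1 \<union> shft D1 ` ends D2"
  then show "partner (stack D1 D2) e \<in> ends D1 \<union> shft D1 ` ends D2 \<and>
         partner (stack D1 D2) (partner (stack D1 D2) e) = e \<and> partner (stack D1 D2) e \<noteq> e"
  proof
    assume e: "e \<in> ends D1"
    then show ?thesis using assms(1) unfolding wf_jdiag_def
      by (auto simp: partner_stack1)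
  next
    assume "e \<in> shft D1 ` ends D2"
    then obtain e' where e': "e = shft D1 e'" "e' \<in> ends D2" by blast
    then show ?thesis using assms(2) unfolding wf_jdiag_def
      by (auto simp: partner_stack2 inj_eq[OF shft_inj])
  qed
qed

definition merge :: "jdiag \<Rightarrow> jdiag \<Rightarrow> (jend \<Rightarrow> (nat \<times> nat) option) \<Rightarrow> (jend \<Rightarrow> (nat \<times> nat) option)
   \<Rightarrow> (jend \<Rightarrow> (nat \<times> nat) option)" where
  "merge D1 D2 \<kappa>1 \<kappa>2 = (\<lambda>e. if e \<in> ends D1 then \<kappa>1 e else if e \<in> shft D1 ` ends D2 then \<kappa>2 (unshft D1 e) else undefined)"

lemma merge1: "e \<in> ends D1 \<Longrightarrow> merge D1 D2 \<kappa>1 \<kappa>2 e = \<kappa>1 e"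
  unfolding merge_def by simp

lemma merge2: "e \<in> ends D2 \<Longrightarrow> merge D1 D2 \<kappa>1 \<kappa>2 (shft D1 e) = \<kappa>2 e"
  unfolding merge_def by (simp add: shft_notin)

definition split_st :: "jdiag \<Rightarrow> jdiag \<Rightarrow> (jend \<Rightarrow> (nat \<times> nat) option) \<Rightarrow>
    (jend \<Rightarrow> (nat \<times> nat) option) \<times> (jend \<Rightarrow> (nat \<times> nat) option)" where
  "split_st D1 D2 \<kappa> = (restrict \<kappa> (ends D1), restrict (\<lambda>e. \<kappa> (shft D1 e)) (ends D2))"

lemma merge_bij:
  assumes "wf_jdiag D1" "wf_jdiag D2"
  shows "bij_betw (\<lambda>(\<kappa>1, \<kappa>2). merge D1 D2 \<kappa>1 \<kappa>2) (states N D1 \<times> states N D2) (states N (stack D1 D2))"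
proof (rule bij_betw_byWitness[where f'="split_st D1 D2"])
  show "\<forall>a\<in>states N D1 \<times> states N D2. split_st D1 D2 (case a of (\<kappa>1, \<kappa>2) \<Rightarrow> merge D1 D2 \<kappa>1 \<kappa>2) = a"
  proof
    fix a assume "a \<in> states N D1 \<times> states N D2"
    then obtain \<kappa>1 \<kappa>2 where a: "a = (\<kappa>1, \<kappa>2)" "\<kappa>1 \<in> states N D1" "\<kappa>2 \<in> states N D2" by blast
    have "restrict (merge D1 D2 \<kappa>1 \<kappa>2) (ends D1) = \<kappa>1"
      using a(2) unfolding states_def by (auto simp: merge1 PiE_iff extensional_def)
    moreover have "restrict (\<lambda>e. merge D1 D2 \<kappa>1 \<kappa>2 (shft D1 e)) (ends D2) = \<kappa>2"
      using a(3) unfolding states_def by (auto simp: merge2 PiE_iff extensional_def)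
    ultimately show "split_st D1 D2 (case a of (\<kappa>1, \<kappa>2) \<Rightarrow> merge D1 D2 \<kappa>1 \<kappa>2) = a"
      unfolding split_st_def a by simp
  qed
next
  show "\<forall>a'\<in>states N (stack D1 D2). (case split_st D1 D2 a' of (\<kappa>1, \<kappa>2) \<Rightarrow> merge D1 D2 \<kappa>1 \<kappa>2) = a'"
  proof
    fix \<kappa> assume k: "\<kappa> \<in> states N (stack D1 D2)"
    show "(case split_st D1 D2 \<kappa> of (\<kappa>1, \<kappa>2) \<Rightarrow> merge D1 D2 \<kappa>1 \<kappa>2) = \<kappa>"
    proof
      fix e
      show "(case split_st D1 D2 \<kappa> of (\<kappa>1, \<kappa>2) \<Rightarrow> merge D1 D2 \<kappa>1 \<kappa>2) e = \<kappa> e"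
        using k unfolding split_st_def merge_def states_def ends_stack
        by (auto simp: PiE_iff extensional_def shft_notin)
    qed
  qed
next
  show "(\<lambda>(\<kappa>1, \<kappa>2). merge D1 D2 \<kappa>1 \<kappa>2) ` (states N D1 \<times> states N D2) \<subseteq> states N (stack D1 D2)"
  proof
    fix \<kappa> assume "\<kappa> \<in> (\<lambda>(\<kappa>1, \<kappa>2). merge D1 D2 \<kappa>1 \<kappa>2) ` (states N D1 \<times> states N D2)"
    then obtain \<kappa>1 \<kappa>2 where k: "\<kappa> = merge D1 D2 \<kappa>1 \<kappa>2" "\<kappa>1 \<in> states N D1" "\<kappa>2 \<in> states N D2" by auto
    have p1: "\<forall>e\<in>ends D1. partner D1 e \<in> ends D1" "\<forall>e\<in>ends D2. partner D2 e \<in> ends D2"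
      using assms unfolding wf_jdiag_def by auto
    show "\<kappa> \<in> states N (stack D1 D2)"
      unfolding states_def ends_stack
    proof (intro CollectI conjI ballI)
      show "\<kappa> \<in> ends D1 \<union> shft D1 ` ends D2 \<rightarrow>\<^sub>E omega_idx N"
        using k unfolding states_def merge_def by (auto simp: PiE_iff extensional_def)
    next
      fix e assume "e \<in> ends D1 \<union> shft D1 ` ends D2"
      then show "\<kappa> (partner (stack D1 D2) e) = \<kappa> e"
      proof
        assume e: "e \<in> ends D1"
        then show ?thesis using k p1 unfolding states_def
          by (auto simp: partner_stack1 merge1)
      next
        assume "e \<in> shft D1 ` ends D2"
        then obtain e' where e': "e = shft D1 e'" "e' \<in> ends D2" by blast
        then show ?thesis using k p1 unfolding states_def
          by (auto simp: partner_stack2 merge2)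
      qed
    qed
  qed
next
  show "split_st D1 D2 ` states N (stack D1 D2) \<subseteq> states N D1 \<times> states N D2"
  proof
    fix x assume "x \<in> split_st D1 D2 ` states N (stack D1 D2)"
    then obtain \<kappa> where x: "x = split_st D1 D2 \<kappa>" and k: "\<kappa> \<in> states N (stack D1 D2)" by blast
    have p1: "\<forall>e\<in>ends D1. partner D1 e \<in> ends D1" "\<forall>e\<in>ends D2. partner D2 e \<in> ends D2"
      using assms unfolding wf_jdiag_def by auto
    have kv: "\<kappa> e \<in> omega_idx N" if "e \<in> ends D1 \<union> shft D1 ` ends D2" for e
      using k that unfolding states_def ends_stack by auto
    have kp: "\<kappa> (partner (stack D1 D2) e) = \<kappa> e" if "e \<in> ends D1 \<union> shft D1 ` ends D2" for e
      using k that unfolding states_def ends_stack by auto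
    have kp1: "\<kappa> (partner D1 e) = \<kappa> e" if "e \<in> ends D1" for e
      using kp[of e] that partner_stack1[OF that, of D2] by simp
    have "restrict \<kappa> (ends D1) \<in> states N D1"
      unfolding states_def using kv kp1 p1 by auto
    moreover have "restrict (\<lambda>e. \<kappa> (shft D1 e)) (ends D2) \<in> states N D2"
      unfolding states_def using kv kp[of "shft D1 _"] p1 by (auto simp: partner_stack2)
    ultimately show "x \<in> states N D1 \<times> states N D2" unfolding x split_st_def by simp
  qed
qed


lemma endval_merge1: "e \<in> ends D1 \<Longrightarrow> endval N (stack D1 D2) (merge D1 D2 \<kappa>1 \<kappa>2) e = endval N D1 \<kappa>1 e"
  unfolding endval_def by (simp add: partner_stack1 merge1)

lemma endval_merge2: "e \<in> ends D2 \<Longrightarrow> endval N (stack D1 D2) (merge D1 D2 \<kappa>1 \<kappa>2) (shft D1 e) = endval N D2 \<kappa>2 e"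
  unfolding endval_def by (simp add: partner_stack2 merge2)

lemma finite_ends: "finite (ends D)"
  unfolding ends_decomp by auto

lemma prod_split: "(\<Prod>v<a+(b::nat). g v) = (\<Prod>v<a. g v) * (\<Prod>w<b. g (w + a))"
  by (induction b) (auto simp: mult.assoc add.commute)

lemma state_weight_merge:
  shows "state_weight N (stack D1 D2) (merge D1 D2 \<kappa>1 \<kappa>2) = state_weight N D1 \<kappa>1 * (state_weight N D2 \<kappa>2 :: 'k::field)"
proof -
  let ?E = "\<lambda>D. {e \<in> ends D. end_lt e (partner D e)}"
  have E: "?E (stack D1 D2) = ?E D1 \<union> shft D1 ` ?E D2"
    unfolding ends_stack by (auto simp: partner_stack1 partner_stack2)
  have fin: "finite (?E D)" for D using finite_ends by auto
  have ep: "(\<Prod>e \<in> ?E (stack D1 D2). omega_coef N (merge D1 D2 \<kappa>1 \<kappa>2 e)) =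
     (\<Prod>e \<in> ?E D1. omega_coef N (\<kappa>1 e)) * (\<Prod>e \<in> ?E D2. (omega_coef N (\<kappa>2 e) :: 'k))"
  proof -
    have "(\<Prod>e \<in> ?E (stack D1 D2). omega_coef N (merge D1 D2 \<kappa>1 \<kappa>2 e)) =
       (\<Prod>e \<in> ?E D1. omega_coef N (merge D1 D2 \<kappa>1 \<kappa>2 e)) * (\<Prod>e \<in> shft D1 ` ?E D2. (omega_coef N (merge D1 D2 \<kappa>1 \<kappa>2 e) :: 'k))"
      unfolding E by (rule prod.union_disjoint) (use fin shft_notin in auto)
    also have "(\<Prod>e \<in> shft D1 ` ?E D2. (omega_coef N (merge D1 D2 \<kappa>1 \<kappa>2 e) :: 'k)) =
        (\<Prod>e \<in> ?E D2. (omega_coef N (merge D1 D2 \<kappa>1 \<kappa>2 (shft D1 e)) :: 'k))"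
      using prod.reindex[OF inj_on_subset[OF shft_inj subset_UNIV], where g="\<lambda>e. omega_coef N (merge D1 D2 \<kappa>1 \<kappa>2 e) :: 'k"]
      by (simp add: comp_def)
    also have "\<dots> = (\<Prod>e \<in> ?E D2. (omega_coef N (\<kappa>2 e) :: 'k))"
      by (rule prod.cong) (auto simp: merge2)
    also have "(\<Prod>e \<in> ?E D1. omega_coef N (merge D1 D2 \<kappa>1 \<kappa>2 e)) = (\<Prod>e \<in> ?E D1. (omega_coef N (\<kappa>1 e) :: 'k))"
      by (rule prod.cong) (auto simp: merge1)
    finally show ?thesis .
  qed
  let ?V = "\<lambda>D \<kappa> v. - trform N (mbracket N (endval N D \<kappa> (TV v 0)) (endval N D \<kappa> (TV v 1))) (endval N D \<kappa> (TV v 2)) :: 'k"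
  have vp: "(\<Prod>v<nverts (stack D1 D2). ?V (stack D1 D2) (merge D1 D2 \<kappa>1 \<kappa>2) v) =
      (\<Prod>v<nverts D1. ?V D1 \<kappa>1 v) * (\<Prod>v<nverts D2. ?V D2 \<kappa>2 v)"
  proof -
    have n: "nverts (stack D1 D2) = nverts D1 + nverts D2" unfolding stack_def by simp
    have e1: "TV v t \<in> ends D1" if "v < nverts D1" "t < 3" for v t using that unfolding ends_def by auto
    have e2: "TV v t \<in> ends D2" if "v < nverts D2" "t < 3" for v t using that unfolding ends_def by auto
    have s: "TV (v + nverts D1) t = shft D1 (TV v t)" for v t unfolding shft_def by simp
    show ?thesis unfolding n prod_split
      apply (rule arg_cong2[where f="(*)"])
       apply (rule prod.cong[OF refl]) apply (simp add: endval_merge1 e1)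
      apply (rule prod.cong[OF refl]) apply (simp add: s endval_merge2 e2)
      done
  qed
  show ?thesis unfolding state_weight_def ep vp by (simp add: ac_simps)
qed

definition rb :: "nat \<Rightarrow> 'k::field mat \<Rightarrow> bool" where
  "rb N M \<longleftrightarrow> (\<forall>a b. M a b \<noteq> 0 \<longrightarrow> a < N \<and> b < N)"

lemma rb_mprod: "(\<And>M. M \<in> set Ms \<Longrightarrow> rb N M) \<Longrightarrow> rb N (mprod N Ms)"
proof (induction Ms)
  case Nil
  then show ?case by (simp add: rb_def mid_def)
next
  case (Cons A Ms)
  then have "rb N A" "rb N (mprod N Ms)" by auto
  then show ?case unfolding rb_def mprod.simps mmul_def
    by (metis (no_types, lifting) mult_not_zero sum.neutral)
qed

lemma mmul_assoc: "mmul N (mmul N A B) C = mmul N A (mmul N B (C :: 'k::field mat))"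
proof (intro ext)
  fix x y
  have "mmul N (mmul N A B) C x y = (\<Sum>m<N. \<Sum>p<N. A x p * B p m * C m y)"
    unfolding mmul_def by (simp add: sum_distrib_right)
  also have "\<dots> = (\<Sum>p<N. \<Sum>m<N. A x p * B p m * C m y)" by (rule sum.swap)
  also have "\<dots> = mmul N A (mmul N B C) x y"
    unfolding mmul_def by (simp add: sum_distrib_left mult.assoc)
  finally show "mmul N (mmul N A B) C x y = mmul N A (mmul N B C) x y" .
qed

lemma mmul_mid: "rb N M \<Longrightarrow> mmul N (mid N) M = (M :: 'k::field mat)"
proof (intro ext)
  fix i j assume r: "rb N M"
  have "mmul N (mid N) M i j = (\<Sum>m<N. if m = i then M i j else 0)"
    unfolding mmul_def mid_def by (rule sum.cong) auto
  also have "\<dots> = M i j" using r unfolding rb_def by auto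
  finally show "mmul N (mid N) M i j = M i j" .
qed

lemma mprod_append: "rb N (mprod N ys) \<Longrightarrow> mprod N (xs @ ys) = mmul N (mprod N xs) (mprod N ys :: 'k::field mat)"
  by (induction xs) (simp_all add: mmul_mid mmul_assoc)

lemma upt_split: "[0..<a+b] = [0..<a] @ map (\<lambda>w. w + a) [0..<b]"
  by (induction b) auto

lemma rb_endval: "\<kappa> \<in> states N D \<Longrightarrow> e \<in> ends D \<Longrightarrow> rb N (endval N D \<kappa> e :: 'k::field mat)"
  using haschg_endval[of \<kappa> N D e] unfolding haschg_def rb_def by blast

lemma strand_val_merge:
  assumes "\<kappa>2 \<in> states N D2" "s < 2"
  shows "strand_val N (stack D1 D2) (merge D1 D2 \<kappa>1 \<kappa>2) s = mmul N (strand_val N D1 \<kappa>1 s) (strand_val N D2 \<kappa>2 s :: 'k::field mat)"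
proof -
  have e1: "SP s p \<in> ends D1" if "p < npts D1 s" for p using that assms(2) unfolding ends_def by auto
  have e2: "SP s p \<in> ends D2" if "p < npts D2 s" for p using that assms(2) unfolding ends_def by auto
  have sh: "SP s (w + npts D1 s) = shft D1 (SP s w)" for w unfolding shft_def by simp
  have np: "npts (stack D1 D2) s = npts D1 s + npts D2 s" unfolding stack_def by simp
  have m1: "map (\<lambda>p. endval N (stack D1 D2) (merge D1 D2 \<kappa>1 \<kappa>2) (SP s p)) [0..<npts D1 s]
      = map (\<lambda>p. endval N D1 \<kappa>1 (SP s p) :: 'k mat) [0..<npts D1 s]"
    by (auto simp: endval_merge1 e1)
  have m2: "map (\<lambda>p. endval N (stack D1 D2) (merge D1 D2 \<kappa>1 \<kappa>2) (SP s p)) (map (\<lambda>w. w + npts D1 s) [0..<npts D2 s])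
      = map (\<lambda>p. endval N D2 \<kappa>2 (SP s p) :: 'k mat) [0..<npts D2 s]"
    by (auto simp: sh endval_merge2 e2)
  have rb2: "rb N (strand_val N D2 \<kappa>2 s :: 'k mat)"
    unfolding strand_val_def by (rule rb_mprod) (auto simp: rb_endval[OF assms(1) e2])
  show ?thesis
    unfolding strand_val_def np upt_split map_append m1 m2
    by (rule mprod_append) (use rb2 in \<open>simp add: strand_val_def\<close>)
qed

lemma Wst_stack:
  assumes "wf_jdiag D1" "wf_jdiag D2"
  shows "Wst N (stack D1 D2) = tmul N (Wst N D1) (Wst N D2 :: 'k::field tens2)"
proof (intro ext)
  fix i j k l
  let ?w = "\<lambda>D \<kappa>. state_weight N D \<kappa> :: 'k"
  let ?a = "\<lambda>D \<kappa>. strand_val N D \<kappa> 0 :: 'k mat"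
  let ?b = "\<lambda>D \<kappa>. strand_val N D \<kappa> 1 :: 'k mat"
  let ?S1 = "states N D1" and ?S2 = "states N D2"
  let ?X = "\<lambda>\<kappa>1 \<kappa>2 m n. (?w D1 \<kappa>1 * ?a D1 \<kappa>1 i m * ?b D1 \<kappa>1 k n) * (?w D2 \<kappa>2 * ?a D2 \<kappa>2 m j * ?b D2 \<kappa>2 n l)"
  have "Wst N (stack D1 D2) i j k l =
     (\<Sum>(\<kappa>1,\<kappa>2)\<in>?S1 \<times> ?S2. ?w (stack D1 D2) (merge D1 D2 \<kappa>1 \<kappa>2) * ?a (stack D1 D2) (merge D1 D2 \<kappa>1 \<kappa>2) i j
          * ?b (stack D1 D2) (merge D1 D2 \<kappa>1 \<kappa>2) k l)"
    unfolding Wst_def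
    using sum.reindex_bij_betw[OF merge_bij[OF assms, of N],
        of "\<lambda>\<kappa>. ?w (stack D1 D2) \<kappa> * ?a (stack D1 D2) \<kappa> i j * ?b (stack D1 D2) \<kappa> k l"]
    by (simp add: case_prod_beta')
  also have "\<dots> = (\<Sum>\<kappa>1\<in>?S1. \<Sum>\<kappa>2\<in>?S2. \<Sum>m<N. \<Sum>n<N. ?X \<kappa>1 \<kappa>2 m n)"
    unfolding sum.cartesian_product[symmetric]
  proof (intro sum.cong refl)
    fix \<kappa>1 \<kappa>2 assume "\<kappa>2 \<in> ?S2"
    then show "?w (stack D1 D2) (merge D1 D2 \<kappa>1 \<kappa>2) * ?a (stack D1 D2) (merge D1 D2 \<kappa>1 \<kappa>2) i j
          * ?b (stack D1 D2) (merge D1 D2 \<kappa>1 \<kappa>2) k l = (\<Sum>m<N. \<Sum>n<N. ?X \<kappa>1 \<kappa>2 m n)"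
      by (simp add: state_weight_merge strand_val_merge mmul_def sum_product sum_distrib_left
             sum_distrib_right ac_simps)
  qed
  also have "\<dots> = (\<Sum>m<N. \<Sum>n<N. \<Sum>\<kappa>1\<in>?S1. \<Sum>\<kappa>2\<in>?S2. ?X \<kappa>1 \<kappa>2 m n)"
  proof -
    have "(\<Sum>\<kappa>1\<in>?S1. \<Sum>\<kappa>2\<in>?S2. \<Sum>m<N. \<Sum>n<N. ?X \<kappa>1 \<kappa>2 m n) =
          (\<Sum>\<kappa>1\<in>?S1. \<Sum>m<N. \<Sum>\<kappa>2\<in>?S2. \<Sum>n<N. ?X \<kappa>1 \<kappa>2 m n)"
      by (intro sum.cong refl) (rule sum.swap)
    also have "\<dots> = (\<Sum>m<N. \<Sum>\<kappa>1\<in>?S1. \<Sum>\<kappa>2\<in>?S2. \<Sum>n<N. ?X \<kappa>1 \<kappa>2 m n)"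
      by (rule sum.swap)
    also have "\<dots> = (\<Sum>m<N. \<Sum>\<kappa>1\<in>?S1. \<Sum>n<N. \<Sum>\<kappa>2\<in>?S2. ?X \<kappa>1 \<kappa>2 m n)"
      by (intro sum.cong refl) (rule sum.swap)
    also have "\<dots> = (\<Sum>m<N. \<Sum>n<N. \<Sum>\<kappa>1\<in>?S1. \<Sum>\<kappa>2\<in>?S2. ?X \<kappa>1 \<kappa>2 m n)"
      by (intro sum.cong refl) (rule sum.swap)
    finally show ?thesis .
  qed
  also have "\<dots> = tmul N (Wst N D1) (Wst N D2 :: 'k tens2) i j k l"
    unfolding tmul_def Wst_def
    by (simp add: sum_product)
  finally show "Wst N (stack D1 D2) i j k l = tmul N (Wst N D1) (Wst N D2 :: 'k tens2) i j k l" .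
qed


definition D0 :: jdiag where "D0 = \<lparr>nverts = 0, npts = (\<lambda>_. 0), partner = id\<rparr>"

lemma ends_D0: "ends D0 = {}" unfolding ends_def D0_def by auto

lemma wf_D0: "wf_jdiag D0" unfolding wf_jdiag_def ends_D0 by simp

lemma Wst_D0: "Wst N D0 = (tid N :: 'k::field tens2)"
proof -
  have st: "states N D0 = {\<lambda>_. undefined}" unfolding states_def ends_D0 by simp
  show ?thesis unfolding Wst_def st tid_def
    by (intro ext) (simp add: state_weight_def strand_val_def ends_D0, simp add: D0_def)
qed

lemma tmul_lin:
  "tmul N (\<lambda>i j k l. \<Sum>x\<in>A. f x i j k l) (\<lambda>i j k l. \<Sum>y\<in>B. g y i j k l) =
   (\<lambda>i j k l. \<Sum>x\<in>A. \<Sum>y\<in>B. tmul N (f x) (g y :: 'k::field tens2) i j k l)"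
proof (intro ext)
  fix i j k l
  let ?X = "\<lambda>x y m n. f x i m k n * g y m j n l"
  have "tmul N (\<lambda>i j k l. \<Sum>x\<in>A. f x i j k l) (\<lambda>i j k l. \<Sum>y\<in>B. g y i j k l) i j k l =
     (\<Sum>m<N. \<Sum>n<N. \<Sum>x\<in>A. \<Sum>y\<in>B. ?X x y m n)"
    unfolding tmul_def by (simp add: sum_product)
  also have "\<dots> = (\<Sum>x\<in>A. \<Sum>y\<in>B. \<Sum>m<N. \<Sum>n<N. ?X x y m n)"
  proof -
    have "(\<Sum>x\<in>A. \<Sum>y\<in>B. \<Sum>m<N. \<Sum>n<N. ?X x y m n) =
          (\<Sum>x\<in>A. \<Sum>m<N. \<Sum>y\<in>B. \<Sum>n<N. ?X x y m n)"
      by (intro sum.cong refl) (rule sum.swap)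
    also have "\<dots> = (\<Sum>m<N. \<Sum>x\<in>A. \<Sum>y\<in>B. \<Sum>n<N. ?X x y m n)"
      by (rule sum.swap)
    also have "\<dots> = (\<Sum>m<N. \<Sum>x\<in>A. \<Sum>n<N. \<Sum>y\<in>B. ?X x y m n)"
      by (intro sum.cong refl) (rule sum.swap)
    also have "\<dots> = (\<Sum>m<N. \<Sum>n<N. \<Sum>x\<in>A. \<Sum>y\<in>B. ?X x y m n)"
      by (intro sum.cong refl) (rule sum.swap)
    finally show ?thesis by simp
  qed
  also have "\<dots> = (\<Sum>x\<in>A. \<Sum>y\<in>B. tmul N (f x) (g y) i j k l)"
    unfolding tmul_def by simp
  finally show "tmul N (\<lambda>i j k l. \<Sum>x\<in>A. f x i j k l) (\<lambda>i j k l. \<Sum>y\<in>B. g y i j k l) i j k l =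
     (\<Sum>x\<in>A. \<Sum>y\<in>B. tmul N (f x) (g y :: 'k::field tens2) i j k l)" .
qed

lemma tmul_smult: "tmul N (\<lambda>i j k l. a * A i j k l) (\<lambda>i j k l. b * B i j k l) i j k l = (a*b) * tmul N A (B :: 'k::field tens2) i j k l"
  unfolding tmul_def sum_distrib_left by (intro sum.cong refl) (simp add: mult_ac)

lemma image_tid: "tid N \<in> (Wst_image N :: 'k::field tens2 set)"
proof -
  have "tid N = (\<lambda>i j k l. \<Sum>D\<in>{D0}. (\<lambda>_. 1) D * Wst N D i j k l :: 'k)"
    by (simp add: Wst_D0)
  then show ?thesis unfolding Wst_image_def
    by (intro CollectI exI[of _ "{D0}"] exI[of _ "\<lambda>_. 1::'k"] conjI) (use wf_D0 in auto)
qed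

lemma image_add:
  assumes "S \<in> Wst_image N" "T \<in> Wst_image N"
  shows "(\<lambda>i j k l. S i j k l + T i j k l) \<in> (Wst_image N :: 'k::field tens2 set)"
proof -
  obtain F c where S: "S = (\<lambda>i j k l. \<Sum>D\<in>F. c D * Wst N D i j k l)" "finite F" "\<forall>D\<in>F. wf_jdiag D"
    using assms(1) unfolding Wst_image_def by blast
  obtain G d where T: "T = (\<lambda>i j k l. \<Sum>D\<in>G. d D * Wst N D i j k l)" "finite G" "\<forall>D\<in>G. wf_jdiag D"
    using assms(2) unfolding Wst_image_def by blast
  have "(\<lambda>i j k l. \<Sum>x\<in>F <+> G. (case_sum c d x) * Wst N (case_sum id id x) i j k l) \<in> Wst_image N"
    by (rule span_gen) (use S T in auto)
  moreover have "(\<lambda>i j k l. \<Sum>x\<in>F <+> G. (case_sum c d x) * Wst N (case_sum id id x) i j k l) =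
     (\<lambda>i j k l. S i j k l + T i j k l)"
    unfolding S T using S(2) T(2) by (simp add: sum.Plus comp_def)
  ultimately show ?thesis by simp
qed

lemma image_smult:
  assumes "S \<in> Wst_image N"
  shows "(\<lambda>i j k l. a * S i j k l) \<in> (Wst_image N :: 'k::field tens2 set)"
proof -
  obtain F c where S: "S = (\<lambda>i j k l. \<Sum>D\<in>F. c D * Wst N D i j k l)" "finite F" "\<forall>D\<in>F. wf_jdiag D"
    using assms(1) unfolding Wst_image_def by blast
  have "(\<lambda>i j k l. \<Sum>D\<in>F. (a * c D) * Wst N (id D) i j k l) \<in> Wst_image N"
    by (rule span_gen) (use S in auto)
  moreover have "(\<lambda>i j k l. \<Sum>D\<in>F. (a * c D) * Wst N (id D) i j k l) = (\<lambda>i j k l. a * S i j k l)"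
    unfolding S by (simp add: sum_distrib_left mult.assoc)
  ultimately show ?thesis by simp
qed

lemma image_tmul:
  assumes "S \<in> Wst_image N" "T \<in> Wst_image N"
  shows "tmul N S T \<in> (Wst_image N :: 'k::field tens2 set)"
proof -
  obtain F c where S: "S = (\<lambda>i j k l. \<Sum>D\<in>F. c D * Wst N D i j k l)" "finite F" "\<forall>D\<in>F. wf_jdiag D"
    using assms(1) unfolding Wst_image_def by blast
  obtain G d where T: "T = (\<lambda>i j k l. \<Sum>D\<in>G. d D * Wst N D i j k l)" "finite G" "\<forall>D\<in>G. wf_jdiag D"
    using assms(2) unfolding Wst_image_def by blast
  have "(\<lambda>i j k l. \<Sum>x\<in>F \<times> G. (c (fst x) * d (snd x)) * Wst N (stack (fst x) (snd x)) i j k l) \<in> Wst_image N"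
    by (rule span_gen) (use S T in \<open>auto intro: wf_stack\<close>)
  moreover have "(\<lambda>i j k l. \<Sum>x\<in>F \<times> G. (c (fst x) * d (snd x)) * Wst N (stack (fst x) (snd x)) i j k l) =
     tmul N S T"
  proof -
    have "tmul N S T = (\<lambda>i j k l. \<Sum>D\<in>F. \<Sum>E\<in>G. tmul N (\<lambda>i j k l. c D * Wst N D i j k l) (\<lambda>i j k l. d E * Wst N E i j k l) i j k l)"
      unfolding S(1) T(1) by (rule tmul_lin)
    also have "\<dots> = (\<lambda>i j k l. \<Sum>D\<in>F. \<Sum>E\<in>G. (c D * d E) * Wst N (stack D E) i j k l)"
    proof (intro ext sum.cong refl)
      fix i j k l D E assume "D \<in> F" "E \<in> G"
      then have "Wst N (stack D E) = tmul N (Wst N D) (Wst N E :: 'k tens2)"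
        using S T wf_stack Wst_stack by blast
      then show "tmul N (\<lambda>i j k l. c D * Wst N D i j k l) (\<lambda>i j k l. d E * Wst N E i j k l) i j k l =
          (c D * d E) * Wst N (stack D E) i j k l"
        by (simp add: tmul_smult)
    qed
    finally show ?thesis by (simp add: sum.cartesian_product case_prod_beta')
  qed
  ultimately show ?thesis by simp
qed

theorem corollary5p5:
  fixes N :: nat
  assumes "N \<ge> 2"
  shows "comm_subalgebra N (Wst_image N :: ('k::field_char_0) tens2 set)"
  unfolding comm_subalgebra_def
proof (intro conjI ballI allI)
  show "tid N \<in> (Wst_image N :: 'k tens2 set)" by (rule image_tid)
next
  fix S T :: "'k tens2" assume "S \<in> Wst_image N" "T \<in> Wst_image N"
  then show "(\<lambda>i j k l. S i j k l + T i j k l) \<in> Wst_image N" by (rule image_add)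
next
  fix c :: 'k and S :: "'k tens2" assume "S \<in> Wst_image N"
  then show "(\<lambda>i j k l. c * S i j k l) \<in> Wst_image N" by (rule image_smult)
next
  fix S T :: "'k tens2" assume "S \<in> Wst_image N" "T \<in> Wst_image N"
  then show "tmul N S T \<in> Wst_image N" by (rule image_tmul)
next
  fix S T :: "'k tens2" assume "S \<in> Wst_image N" "T \<in> Wst_image N"
  then show "tmul N S T = tmul N T S" by (intro Qp_comm Qp_image)
qed

end
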